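(* The abelian group $\ell^\infty(\mathbb{Z})_S$ is torsion-free: if $a,c\in\ell^\infty(\mathbb{Z})$ and $n\ge1$ satisfy $na=c-Sc$, then $a=c'-Sc'$ for some $c'\in\ell^\infty(\mathbb{Z})$.
   Context: $\ell^\infty(\mathbb{Z})$ denotes the abelian group of bounded integer-valued sequences $(a_j)_{j\in\mathbb{Z}}$, $S(a_j)_j=(a_{j+1})_j$ is the shift, and $\ell^\infty(\mathbb{Z})_S=\ell^\infty(\mathbb{Z})/\{a-Sa: a\in\ell^\infty(\mathbb{Z})\}$. *)

theory Defs
  imports Main
begin

definition bounded_int_seq :: "(int \<Rightarrow> int) \<Rightarrow> bool" where
  "bounded_int_seq a \<longleftrightarrow> (\<exists>B. \<forall>j. \<bar>a j\<bar> \<le> B)"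

definition shift :: "(int \<Rightarrow> int) \<Rightarrow> (int \<Rightarrow> int)" where
  "shift a = (\<lambda>j. a (j + 1))"

end

theory Submission
  imports Defs
begin

theorem lemma5p2:
  fixes a c :: "int \<Rightarrow> int" and n :: nat
  assumes "bounded_int_seq a" and "bounded_int_seq c" and "n \<ge> 1"
    and "\<forall>j. int n * a j = c j - shift c j"
  shows "\<exists>c'. bounded_int_seq c' \<and> (\<forall>j. a j = c' j - shift c' j)"
proof -
  define m where "m = int n"
  have m0: "m > 0" using assms(3) by (simp add: m_def)
  have step: "c (j+1) mod m = c j mod m" for j
  proof -
    have "c j = c (j+1) + m * a j" using assms(4) by (simp add: shift_def m_def)
    then show ?thesis by simp
  qed
  have const: "c j mod m = c 0 mod m" for j
  proof (induct j rule: int_induct[where k=0])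
    case base then show ?case by simp
  next
    case (step1 i) then show ?case using step[of i] by simp
  next
    case (step2 i) then show ?case using step[of "i-1"] by simp
  qed
  define c' where "c' j = c j div m" for j
  have dec: "c j = m * c' j + c 0 mod m" for j
    using const[of j] div_mult_mod_eq[of "c j" m] by (simp add: c'_def algebra_simps)
  have "a j = c' j - shift c' j" for j
  proof -
    have "m * a j = c j - c (j+1)" using assms(4) by (simp add: shift_def m_def)
    also have "\<dots> = m * (c' j - c' (j+1))" using dec[of j] dec[of "j+1"] by (simp add: algebra_simps)
    finally show ?thesis using m0 by (simp add: shift_def)
  qed
  moreover have "bounded_int_seq c'"
  proof -
    obtain B where B: "\<forall>j. \<bar>c j\<bar> \<le> B" using assms(2) by (auto simp: bounded_int_seq_def)
    have "\<bar>c' j\<bar> \<le> B + m" for j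
    proof -
      have "\<bar>m * c' j\<bar> \<le> B + m"
        using dec[of j] B pos_mod_bound[OF m0, of "c 0"] pos_mod_sign[OF m0, of "c 0"]
        by (smt (verit))
      moreover have "\<bar>c' j\<bar> \<le> \<bar>m * c' j\<bar>" using m0 by (simp add: abs_mult mult_le_cancel_right1)
      ultimately show ?thesis by linarith
    qed
    then show ?thesis by (auto simp: bounded_int_seq_def)
  qed
  ultimately show ?thesis by blast
qed

end
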